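(* There exists an $HS(3,K_4^{(3)}+e;15,5)$.
   Context: $K_4^{(3)}+e$ denotes the 3-uniform hypergraph with vertex set $\{1,2,3,4,5\}$ and edge set $\{\{1,2,3\},\{1,2,4\},\{1,3,4\},\{2,3,4\},\{3,4,5\}\}$. An $HS(3,K_4^{(3)}+e;v,s)$ is a collection of hypergraphs (blocks) on subsets of a $v$-set $V$, each isomorphic to $K_4^{(3)}+e$, whose edge sets partition the set of all 3-subsets of $V$ that are not contained in a fixed $s$-subset of $V$ (the hole). *)

theory Defs
  imports Main
begin

definition K4e_edges :: "nat set set" where
  "K4e_edges = {{1,2,3},{1,2,4},{1,3,4},{2,3,4},{3,4,5}}"

text \<open>A block on V: the edge set of a copy of K_4^(3)+e, i.e. the image of the
  edges of K_4^(3)+e under an injective vertex map from {1..5} into V.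
  (Every vertex of K_4^(3)+e lies in an edge, so the edge set determines the block.)\<close>
definition is_K4e_block :: "'a set \<Rightarrow> 'a set set \<Rightarrow> bool" where
  "is_K4e_block V b \<longleftrightarrow>
     (\<exists>f. inj_on f {1..5::nat} \<and> f ` {1..5} \<subseteq> V \<and> b = (\<lambda>e. f ` e) ` K4e_edges)"

text \<open>HS(3, K_4^(3)+e; V, H): a collection B of blocks on V whose edge sets partition
  the 3-subsets of V not contained in the hole H.\<close>
definition is_HS_K4e :: "'a set \<Rightarrow> 'a set \<Rightarrow> 'a set set set \<Rightarrow> bool" where
  "is_HS_K4e V H B \<longleftrightarrow>
     (\<forall>b\<in>B. is_K4e_block V b) \<and>
     (\<forall>b1\<in>B. \<forall>b2\<in>B. b1 \<noteq> b2 \<longrightarrow> b1 \<inter> b2 = {}) \<and>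
     \<Union>B = {T. T \<subseteq> V \<and> card T = 3 \<and> \<not> T \<subseteq> H}"

definition HS_K4e_exists :: "nat \<Rightarrow> nat \<Rightarrow> bool" where
  "HS_K4e_exists v s \<longleftrightarrow>
     (\<exists>(V::nat set) H B. finite V \<and> card V = v \<and> H \<subseteq> V \<and> card H = s \<and> is_HS_K4e V H B)"

end

theory Submission
  imports Defs
begin

definition D :: "nat list list" where
  "D = [[1,11,8,9,6], [0,11,1,10,3], [1,14,9,10,13], [2,6,3,14,11], [4,8,0,9,14], [5,8,7,14,0], [4,8,1,12,10], [7,11,3,4,10], [11,14,6,8,10], [7,12,3,13,1], [1,4,6,10,0], [6,10,13,14,8], [4,12,2,6,10], [3,8,5,9,12], [7,14,11,13,10], [2,14,8,9,12], [6,11,3,10,8], [4,11,12,13,0], [6,7,2,5,4], [6,8,4,7,5], [4,9,6,14,5], [5,8,12,13,10], [0,5,4,11,10], [5,8,0,6,9], [3,13,0,10,9], [2,12,1,13,11], [5,11,7,12,1], [8,11,3,12,0], [4,13,3,9,1], [11,13,0,8,10], [8,13,7,9,5], [3,5,2,12,10], [1,6,5,9,4], [0,13,4,6,11], [9,12,13,14,1], [3,14,5,10,9], [1,5,0,12,9], [5,9,0,2,6], [4,5,3,6,7], [3,14,7,9,11], [0,1,7,8,12], [5,14,9,11,6], [6,11,0,7,13], [5,10,4,8,14], [1,12,3,14,13], [0,2,7,10,14], [3,6,9,12,4], [9,11,10,12,7], [7,13,1,6,3], [2,9,6,13,12], [2,8,5,11,10], [0,11,12,14,2], [1,4,7,9,0],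 [6,11,5,13,0], [2,11,1,7,3], [4,14,2,7,13], [5,13,2,10,8], [2,7,3,8,4], [11,14,2,10,4], [0,2,13,14,5], [1,7,5,10,0], [2,8,0,12,10], [1,11,3,5,13], [0,7,4,12,3], [2,13,4,8,11], [9,11,0,3,6], [8,14,10,12,4], [2,6,1,8,5], [1,4,5,13,9], [3,13,6,8,12], [7,11,8,10,9], [6,11,1,12,9], [5,14,1,2,9], [5,6,10,12,3], [4,11,1,14,7], [7,14,6,12,0], [1,6,0,14,5], [10,13,1,8,14], [5,12,4,14,3], [0,3,5,7,13], [3,13,2,11,6], [0,1,9,13,11], [4,9,2,11,0], [7,9,2,12,11], [7,10,4,13,14], [3,9,2,10,1], [0,14,3,8,1], [0,14,4,10,9], [6,9,7,10,3]]"

definition Ls :: "nat list list" where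
  "Ls = [[1,11,8], [1,11,9], [1,8,9], [11,8,9], [8,9,6], [0,11,1], [0,11,10], [0,1,10], [11,1,10], [1,10,3], [1,14,9], [1,14,10], [1,9,10], [14,9,10], [9,10,13], [2,6,3], [2,6,14], [2,3,14], [6,3,14], [3,14,11], [4,8,0], [4,8,9], [4,0,9], [8,0,9], [0,9,14], [5,8,7], [5,8,14], [5,7,14], [8,7,14], [7,14,0], [4,8,1], [4,8,12], [4,1,12], [8,1,12], [1,12,10], [7,11,3], [7,11,4], [7,3,4], [11,3,4], [3,4,10], [11,14,6], [11,14,8], [11,6,8], [14,6,8], [6,8,10], [7,12,3], [7,12,13], [7,3,13], [12,3,13], [3,13,1], [1,4,6], [1,4,10], [1,6,10], [4,6,10], [6,10,0], [6,10,13], [6,10,14], [6,13,14], [10,13,14], [13,14,8], [4,12,2], [4,12,6], [4,2,6], [12,2,6], [2,6,10], [3,8,5], [3,8,9], [3,5,9], [8,5,9], [5,9,12], [7,14,11], [7,14,13], [7,11,13], [14,11,13], [11,13,10], [2,14,8], [2,14,9], [2,8,9], [14,8,9], [8,9,12], [6,11,3], [6,11,10], [6,3,10], [11,3,10], [3,10,8], [4,11,12], [4,11,13], [4,12,13], [11,12,13], [12,13,0], [6,7,2], [6,7,5], [6,2,5], [7,2,5], [2,5,4], [6,8,4], [6,8,7], [6,4,7], [8,4,7], [4,7,5], [4,9,6], [4,9,14], [4,6,14], [9,6,14], [6,14,5], [5,8,12], [5,8,13], [5,12,13], [8,12,13], [12,13,10], [0,5,4], [0,5,11], [0,4,11], [5,4,11],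 [4,11,10], [5,8,0], [5,8,6], [5,0,6], [8,0,6], [0,6,9], [3,13,0], [3,13,10], [3,0,10], [13,0,10], [0,10,9], [2,12,1], [2,12,13], [2,1,13], [12,1,13], [1,13,11], [5,11,7], [5,11,12], [5,7,12], [11,7,12], [7,12,1], [8,11,3], [8,11,12], [8,3,12], [11,3,12], [3,12,0], [4,13,3], [4,13,9], [4,3,9], [13,3,9], [3,9,1], [11,13,0], [11,13,8], [11,0,8], [13,0,8], [0,8,10], [8,13,7], [8,13,9], [8,7,9], [13,7,9], [7,9,5], [3,5,2], [3,5,12], [3,2,12], [5,2,12], [2,12,10], [1,6,5], [1,6,9], [1,5,9], [6,5,9], [5,9,4], [0,13,4], [0,13,6], [0,4,6], [13,4,6], [4,6,11], [9,12,13], [9,12,14], [9,13,14], [12,13,14], [13,14,1], [3,14,5], [3,14,10], [3,5,10], [14,5,10], [5,10,9], [1,5,0], [1,5,12], [1,0,12], [5,0,12], [0,12,9], [5,9,0], [5,9,2], [5,0,2], [9,0,2], [0,2,6], [4,5,3], [4,5,6], [4,3,6], [5,3,6], [3,6,7], [3,14,7], [3,14,9], [3,7,9], [14,7,9], [7,9,11], [0,1,7], [0,1,8], [0,7,8], [1,7,8], [7,8,12], [5,14,9], [5,14,11], [5,9,11], [14,9,11], [9,11,6], [6,11,0], [6,11,7], [6,0,7], [11,0,7], [0,7,13], [5,10,4], [5,10,8], [5,4,8], [10,4,8], [4,8,14], [1,12,3], [1,12,14], [1,3,14], [12,3,14], [3,14,13], [0,2,7], [0,2,10], [0,7,10], [2,7,10],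 [7,10,14], [3,6,9], [3,6,12], [3,9,12], [6,9,12], [9,12,4], [9,11,10], [9,11,12], [9,10,12], [11,10,12], [10,12,7], [7,13,1], [7,13,6], [7,1,6], [13,1,6], [1,6,3], [2,9,6], [2,9,13], [2,6,13], [9,6,13], [6,13,12], [2,8,5], [2,8,11], [2,5,11], [8,5,11], [5,11,10], [0,11,12], [0,11,14], [0,12,14], [11,12,14], [12,14,2], [1,4,7], [1,4,9], [1,7,9], [4,7,9], [7,9,0], [6,11,5], [6,11,13], [6,5,13], [11,5,13], [5,13,0], [2,11,1], [2,11,7], [2,1,7], [11,1,7], [1,7,3], [4,14,2], [4,14,7], [4,2,7], [14,2,7], [2,7,13], [5,13,2], [5,13,10], [5,2,10], [13,2,10], [2,10,8], [2,7,3], [2,7,8], [2,3,8], [7,3,8], [3,8,4], [11,14,2], [11,14,10], [11,2,10], [14,2,10], [2,10,4], [0,2,13], [0,2,14], [0,13,14], [2,13,14], [13,14,5], [1,7,5], [1,7,10], [1,5,10], [7,5,10], [5,10,0], [2,8,0], [2,8,12], [2,0,12], [8,0,12], [0,12,10], [1,11,3], [1,11,5], [1,3,5], [11,3,5], [3,5,13], [0,7,4], [0,7,12], [0,4,12], [7,4,12], [4,12,3], [2,13,4], [2,13,8], [2,4,8], [13,4,8], [4,8,11], [9,11,0], [9,11,3], [9,0,3], [11,0,3], [0,3,6], [8,14,10], [8,14,12], [8,10,12], [14,10,12], [10,12,4], [2,6,1], [2,6,8], [2,1,8], [6,1,8], [1,8,5], [1,4,5], [1,4,13], [1,5,13], [4,5,13],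 [5,13,9], [3,13,6], [3,13,8], [3,6,8], [13,6,8], [6,8,12], [7,11,8], [7,11,10], [7,8,10], [11,8,10], [8,10,9], [6,11,1], [6,11,12], [6,1,12], [11,1,12], [1,12,9], [5,14,1], [5,14,2], [5,1,2], [14,1,2], [1,2,9], [5,6,10], [5,6,12], [5,10,12], [6,10,12], [10,12,3], [4,11,1], [4,11,14], [4,1,14], [11,1,14], [1,14,7], [7,14,6], [7,14,12], [7,6,12], [14,6,12], [6,12,0], [1,6,0], [1,6,14], [1,0,14], [6,0,14], [0,14,5], [10,13,1], [10,13,8], [10,1,8], [13,1,8], [1,8,14], [5,12,4], [5,12,14], [5,4,14], [12,4,14], [4,14,3], [0,3,5], [0,3,7], [0,5,7], [3,5,7], [5,7,13], [3,13,2], [3,13,11], [3,2,11], [13,2,11], [2,11,6], [0,1,9], [0,1,13], [0,9,13], [1,9,13], [9,13,11], [4,9,2], [4,9,11], [4,2,11], [9,2,11], [2,11,0], [7,9,2], [7,9,12], [7,2,12], [9,2,12], [2,12,11], [7,10,4], [7,10,13], [7,4,13], [10,4,13], [4,13,14], [3,9,2], [3,9,10], [3,2,10], [9,2,10], [2,10,1], [0,14,3], [0,14,8], [0,3,8], [14,3,8], [3,8,1], [0,14,4], [0,14,10], [0,4,10], [14,4,10], [4,10,9], [6,9,7], [6,9,10], [6,7,10], [9,7,10], [7,10,3]]"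

definition Cs :: "nat list" where
  "Cs = [2306,2562,770,2816,832,2051,3073,1027,3074,1034,16898,17410,1538,17920,9728,76,16452,16396,16456,18440,273,784,529,769,16897,416,16672,16544,16768,16513,274,4368,4114,4354,5122,2184,2192,152,2072,1048,18496,18688,2368,16704,1344,4232,12416,8328,12296,8202,82,1042,1090,1104,1089,9280,17472,24640,25600,24832,4116,4176,84,4164,1092,296,776,552,800,4640,18560,24704,10368,26624,11264,16644,16900,772,17152,4864,2120,3136,1096,3080,1288,6160,10256,12304,14336,12289,196,224,100,164,52,336,448,208,400,176,592,16912,16464,16960,16480,4384,8480,12320,12544,13312,49,2081,2065,2096,3088,289,352,97,321,577,8201,9224,1033,9217,1537,4102,12292,8198,12290,10242,2208,6176,4256,6272,4226,2312,6400,4360,6152,4105,8216,8720,536,8712,522,10241,10496,2305,8449,1281,8576,8960,896,8832,672,44,4136,4108,4132,5124,98,578,546,608,560,8209,8257,81,8272,2128,12800,20992,25088,28672,24578,16424,17416,1064,17440,1568,35,4130,4099,4129,4609,545,548,37,517,69,56,112,88,104,200,16520,16904,648,17024,2688,131,259,385,386,4480,16928,18464,2592,18944,2624,2113,2240,193,2177,8321,1072,1312,304,1296,16656,4106,20482,16394,20488,24584,133,1029,1153,1156,17536,584,4168,4616,4672,4624,3584,6656,5632,7168,5248,8322,8384,194,8258,74,580,8708,8260,8768,12352,292,2308,2084,2336,3104,6145,18433,20481,22528,20484,146,530,642,656,641,2144,10304,8288,10272,8225,2054,2180,134,2178,138,16404,16528,148,16516,8324,8228,9248,1060,9220,1284,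140,388,268,392,280,18436,19456,3076,17412,1044,8197,16389,24577,24580,24608,162,1154,1058,1184,1057,261,4356,4101,4353,5121,2058,2082,42,2088,8232,145,4225,4113,4240,4120,8212,8452,276,8464,2320,2561,2568,521,2057,73,17664,20736,5376,21504,5136,70,324,262,322,290,50,8210,8226,8240,8736,8264,8456,328,8512,4416,2432,3200,1408,3328,1792,2114,6208,4162,6146,4610,16418,16420,38,16390,518,1120,4192,5152,5184,5128,2066,18448,16402,18434,16514,16576,20608,4288,20544,4161,67,16450,16387,16449,16417,9218,9472,1282,8450,16642,4144,20512,16432,20496,16408,41,137,161,168,8352,8204,10248,2060,10244,2116,515,8195,8705,8706,10752,532,2576,2068,2564,2053,644,4736,4228,4612,6148,1168,9344,8336,9232,24592,524,1544,1036,1540,1030,16393,16641,265,16648,266,16401,17409,1041,17424,1552,704,1600,1216,1664,1160]"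

definition tripL :: "nat list \<Rightarrow> nat list list" where
  "tripL xs = [[xs!0,xs!1,xs!2],[xs!0,xs!1,xs!3],[xs!0,xs!2,xs!3],[xs!1,xs!2,xs!3],[xs!2,xs!3,xs!4]]"

definition cd :: "nat list \<Rightarrow> nat" where
  "cd l = sum_list (map (\<lambda>x. 2^x) l)"

lemma K1: "\<forall>xs\<in>set D. distinct xs \<and> length xs = 5 \<and> (\<forall>x\<in>set xs. x < 15)"
  unfolding D_def by simp

lemma K0: "concat (map tripL D) = Ls"
  unfolding D_def Ls_def tripL_def by simp

lemma K2: "\<forall>l\<in>set Ls. distinct l \<and> length l = 3 \<and> (\<forall>x\<in>set l. x < 15) \<and> (\<exists>x\<in>set l. 5 \<le> x)"
  unfolding Ls_def by simp

lemma K3: "map cd Ls = Cs"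
  unfolding Ls_def Cs_def cd_def by simp

lemma K4: "distinct Cs"
  unfolding Cs_def by simp

lemma K5: "length Ls = 445"
  unfolding Ls_def by simp

lemma K6: "(15::nat) choose 3 = 455"
  by code_simp

lemma K7: "(5::nat) choose 3 = 10"
  by code_simp

lemma blockL:
  assumes "distinct xs" "length xs = 5" "\<forall>x\<in>set xs. x < 15"
  shows "is_K4e_block {0..<15::nat} (set (map set (tripL xs)))"
  unfolding is_K4e_block_def
proof (intro exI conjI)
  let ?f = "\<lambda>i::nat. xs ! (i - 1)"
  show "inj_on ?f {1..5}"
  proof (rule inj_onI)
    fix i j :: nat assume "i \<in> {1..5}" "j \<in> {1..5}" "xs ! (i - 1) = xs ! (j - 1)"
    then have "i - 1 = j - 1" using assms(1,2) nth_eq_iff_index_eq[of xs "i-1" "j-1"] by auto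
    then show "i = j" using \<open>i \<in> {1..5}\<close> \<open>j \<in> {1..5}\<close> by auto
  qed
  show "?f ` {1..5} \<subseteq> {0..<15}"
    using assms(2,3) nth_mem by fastforce
  show "set (map set (tripL xs)) = (\<lambda>e. ?f ` e) ` K4e_edges"
    unfolding tripL_def K4e_edges_def by simp
qed

lemma cardS: "card {T. T \<subseteq> {0..<15::nat} \<and> card T = 3 \<and> \<not> T \<subseteq> {0..<5}} = 445"
proof -
  have e: "{T. T \<subseteq> {0..<15::nat} \<and> card T = 3 \<and> \<not> T \<subseteq> {0..<5}}
      = {T. T \<subseteq> {0..<15::nat} \<and> card T = 3} - {T. T \<subseteq> {0..<5} \<and> card T = 3}"
    by auto
  have s: "{T. T \<subseteq> {0..<5::nat} \<and> card T = 3} \<subseteq> {T. T \<subseteq> {0..<15::nat} \<and> card T = 3}"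
    by auto
  have f: "finite {T. T \<subseteq> {0..<5::nat} \<and> card T = 3}"
    by (rule finite_subset[of _ "Pow {0..<5}"]) auto
  show ?thesis unfolding e
    using card_Diff_subset[OF f s] n_subsets[of "{0..<15::nat}" 3] n_subsets[of "{0..<5::nat}" 3] K6 K7
    by simp
qed

theorem lemma3p7:
  shows "HS_K4e_exists 15 5"
proof -
  define V :: "nat set" where "V = {0..<15}"
  define H :: "nat set" where "H = {0..<5}"
  define S where "S = {T. T \<subseteq> V \<and> card T = 3 \<and> \<not> T \<subseteq> H}"
  define LS where "LS = map set Ls"
  define B where "B = (\<lambda>xs. set (map set (tripL xs))) ` set D"
  have dl: "\<And>l. l \<in> set Ls \<Longrightarrow> cd l = (\<Sum>x\<in>set l. 2^x)"
    using K2 unfolding cd_def by (simp add: sum_list_distinct_conv_sum_set)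
  have "map cd Ls = map (\<lambda>A. \<Sum>x\<in>A. (2::nat)^x) LS"
    unfolding LS_def by (simp add: dl)
  hence "distinct (map (\<lambda>A. \<Sum>x\<in>A. (2::nat)^x) LS)" using K3 K4 by simp
  hence dLS: "distinct LS" by (simp add: distinct_map)
  have sub: "set LS \<subseteq> S"
  proof
    fix T assume "T \<in> set LS"
    then obtain l where l: "l \<in> set Ls" "T = set l" unfolding LS_def by auto
    then have "distinct l \<and> length l = 3 \<and> (\<forall>x\<in>set l. x < 15) \<and> (\<exists>x\<in>set l. 5 \<le> x)"
      using K2 by blast
    then show "T \<in> S" using l(2) distinct_card[of l] unfolding S_def V_def H_def
      by (auto simp: subset_iff not_less)
  qed
  have cLS: "card (set LS) = 445" using dLS K5 distinct_card unfolding LS_def by fastforce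
  have fS: "finite S" unfolding S_def V_def
    by (rule finite_subset[of _ "Pow {0..<15}"]) auto
  have eqS: "set LS = S"
    using card_subset_eq[OF fS sub] cLS cardS unfolding S_def V_def H_def by simp
  have cc: "concat (map (\<lambda>xs. map set (tripL xs)) D) = LS"
    unfolding LS_def K0[symmetric] by (simp add: map_concat comp_def)
  have dc: "distinct (concat (map (\<lambda>xs. map set (tripL xs)) D))" using cc dLS by simp
  have "is_HS_K4e V H B"
    unfolding is_HS_K4e_def
  proof (intro conjI)
    show "\<forall>b\<in>B. is_K4e_block V b"
      using K1 blockL unfolding B_def V_def by auto
    show "\<forall>b1\<in>B. \<forall>b2\<in>B. b1 \<noteq> b2 \<longrightarrow> b1 \<inter> b2 = {}"
    proof (intro ballI impI)
      fix b1 b2 assume "b1 \<in> B" "b2 \<in> B" "b1 \<noteq> b2"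
      then obtain x y where xy: "x \<in> set D" "y \<in> set D"
        "b1 = set (map set (tripL x))" "b2 = set (map set (tripL y))"
        unfolding B_def by blast
      have "map set (tripL x) \<noteq> map set (tripL y)" using xy \<open>b1 \<noteq> b2\<close> by (metis set_map)
      moreover have "map set (tripL x) \<in> set (map (\<lambda>xs. map set (tripL xs)) D)"
        "map set (tripL y) \<in> set (map (\<lambda>xs. map set (tripL xs)) D)" using xy by auto
      ultimately have "set (map set (tripL x)) \<inter> set (map set (tripL y)) = {}"
        using dc unfolding distinct_concat_iff by blast
      then show "b1 \<inter> b2 = {}" using xy by simp
    qed
    show "\<Union>B = {T. T \<subseteq> V \<and> card T = 3 \<and> \<not> T \<subseteq> H}"
    proof -
      have "\<Union>B = set (concat (map (\<lambda>xs. map set (tripL xs)) D))"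
        unfolding B_def by auto
      also have "\<dots> = S" using cc eqS by simp
      finally show ?thesis unfolding S_def .
    qed
  qed
  moreover have "finite V" "card V = 15" "H \<subseteq> V" "card H = 5"
    unfolding V_def H_def by auto
  ultimately show ?thesis unfolding HS_K4e_exists_def by blast
qed

end
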